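(* Let $p\ge 3$ be odd and let $\pi=\langle u,v\mid u^p=v^{2p+1}\rangle$ be the group of the $(p,2p+1)$ torus knot, with meridian $m=u^nv^{-k}$ and longitude $l=v^{2p+1}m^{-p(2p+1)}$, where $k,n\in\mathbb{Z}$ satisfy $-pk+(2p+1)n=1$. If $X,Y\in H[\pi]$ are the images of $m,l$, then $Y\in H^+[\pi][X^{\pm1}]$.
   Context: For a group $\pi$, the Brumfiel–Hilden algebra is $H[\pi]:=\mathbb{C}[\pi]/I$, where $I$ is the two-sided ideal of the group algebra generated by all elements $g(h+h^{-1})-(h+h^{-1})g$ with $g,h\in\pi$. $H^+[\pi]\subset H[\pi]$ is the subalgebra generated by the images of all $g+g^{-1}$, $g\in\pi$. For an element $X\in H[\pi]$ which is the image of a group element, $H^+[\pi][X^{\pm1}]$ denotes the subalgebra of $H[\pi]$ generated by $H^+[\pi]$, $X$ and $X^{-1}$. *)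

theory Defs
  imports Complex_Main "HOL-Algebra.Generated_Groups"
begin

text \<open>The group G is presented by generators u, v and the single relation
  u^p = v^q: it is generated by u, v, satisfies the relation, and has the universal
  property with respect to all groups (on the same element type).\<close>
definition torus_presentation :: "'a monoid \<Rightarrow> 'a \<Rightarrow> 'a \<Rightarrow> nat \<Rightarrow> nat \<Rightarrow> bool" where
  "torus_presentation G u v p q \<longleftrightarrow>
     group G \<and> u \<in> carrier G \<and> v \<in> carrier G \<and>
     u [^]\<^bsub>G\<^esub> p = v [^]\<^bsub>G\<^esub> q \<and>
     generate G {u, v} = carrier G \<and>
     (\<forall>(K::'a monoid) a b. group K \<and> a \<in> carrier K \<and> b \<in> carrier K \<and>
        a [^]\<^bsub>K\<^esub> p = b [^]\<^bsub>K\<^esub> q \<longrightarrow>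
        (\<exists>h \<in> hom G K. h u = a \<and> h v = b))"

definition ga_carrier :: "'a monoid \<Rightarrow> ('a \<Rightarrow> complex) set" where
  "ga_carrier G = {f. finite {x. f x \<noteq> 0} \<and> {x. f x \<noteq> 0} \<subseteq> carrier G}"

definition ga_delta :: "'a \<Rightarrow> 'a \<Rightarrow> complex" where
  "ga_delta g = (\<lambda>x. if x = g then 1 else 0)"

definition ga_add :: "('a \<Rightarrow> complex) \<Rightarrow> ('a \<Rightarrow> complex) \<Rightarrow> 'a \<Rightarrow> complex" where
  "ga_add f f' = (\<lambda>x. f x + f' x)"

definition ga_diff :: "('a \<Rightarrow> complex) \<Rightarrow> ('a \<Rightarrow> complex) \<Rightarrow> 'a \<Rightarrow> complex" where
  "ga_diff f f' = (\<lambda>x. f x - f' x)"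

definition ga_smult :: "complex \<Rightarrow> ('a \<Rightarrow> complex) \<Rightarrow> 'a \<Rightarrow> complex" where
  "ga_smult c f = (\<lambda>x. c * f x)"

definition ga_mult :: "'a monoid \<Rightarrow> ('a \<Rightarrow> complex) \<Rightarrow> ('a \<Rightarrow> complex) \<Rightarrow> 'a \<Rightarrow> complex" where
  "ga_mult G f f' = (\<lambda>x. if x \<in> carrier G
      then (\<Sum>y\<in>{y. f y \<noteq> 0}. f y * f' (inv\<^bsub>G\<^esub> y \<otimes>\<^bsub>G\<^esub> x)) else 0)"

inductive_set ga_subalg :: "'a monoid \<Rightarrow> ('a \<Rightarrow> complex) set \<Rightarrow> ('a \<Rightarrow> complex) set"
  for G S where
  gen: "s \<in> S \<Longrightarrow> s \<in> ga_subalg G S"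
| one: "ga_delta \<one>\<^bsub>G\<^esub> \<in> ga_subalg G S"
| add: "a \<in> ga_subalg G S \<Longrightarrow> b \<in> ga_subalg G S \<Longrightarrow> ga_add a b \<in> ga_subalg G S"
| smult: "a \<in> ga_subalg G S \<Longrightarrow> ga_smult c a \<in> ga_subalg G S"
| mult: "a \<in> ga_subalg G S \<Longrightarrow> b \<in> ga_subalg G S \<Longrightarrow> ga_mult G a b \<in> ga_subalg G S"

inductive_set ga_ideal :: "'a monoid \<Rightarrow> ('a \<Rightarrow> complex) set \<Rightarrow> ('a \<Rightarrow> complex) set"
  for G R where
  gen: "r \<in> R \<Longrightarrow> r \<in> ga_ideal G R"
| zero: "(\<lambda>x. 0) \<in> ga_ideal G R"
| add: "a \<in> ga_ideal G R \<Longrightarrow> b \<in> ga_ideal G R \<Longrightarrow> ga_add a b \<in> ga_ideal G R"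
| smult: "a \<in> ga_ideal G R \<Longrightarrow> ga_smult c a \<in> ga_ideal G R"
| lmult: "c \<in> ga_carrier G \<Longrightarrow> a \<in> ga_ideal G R \<Longrightarrow> ga_mult G c a \<in> ga_ideal G R"
| rmult: "c \<in> ga_carrier G \<Longrightarrow> a \<in> ga_ideal G R \<Longrightarrow> ga_mult G a c \<in> ga_ideal G R"

definition ga_sym :: "'a monoid \<Rightarrow> 'a \<Rightarrow> 'a \<Rightarrow> complex" where
  "ga_sym G h = ga_add (ga_delta h) (ga_delta (inv\<^bsub>G\<^esub> h))"

definition BH_ideal :: "'a monoid \<Rightarrow> ('a \<Rightarrow> complex) set" where
  "BH_ideal G = ga_ideal G
     {ga_diff (ga_mult G (ga_delta g) (ga_sym G h)) (ga_mult G (ga_sym G h) (ga_delta g)) | g h.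
        g \<in> carrier G \<and> h \<in> carrier G}"

text \<open>Preimage in C[G] of H^+[G]: subalgebra generated by all g + g^-1.\<close>
definition Hplus_pre :: "'a monoid \<Rightarrow> ('a \<Rightarrow> complex) set" where
  "Hplus_pre G = ga_subalg G {ga_sym G g | g. g \<in> carrier G}"

text \<open>The image of f in H[G] = C[G]/I lies in the subalgebra of H[G] generated by the
  images of the elements of T (T a subset of C[G]): some element z of the subalgebra of
  C[G] generated by T satisfies f - z \<in> I.\<close>
definition H_in_subalg :: "'a monoid \<Rightarrow> ('a \<Rightarrow> complex) \<Rightarrow> ('a \<Rightarrow> complex) set \<Rightarrow> bool" where
  "H_in_subalg G f T \<longleftrightarrow> (\<exists>z \<in> ga_subalg G T. ga_diff f z \<in> BH_ideal G)"

end

theory Submission imports Defs begin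

lemma ga_carrier_iff: "f \<in> ga_carrier G \<longleftrightarrow> finite {x. f x \<noteq> 0} \<and> (\<forall>x. f x \<noteq> 0 \<longrightarrow> x \<in> carrier G)"
  unfolding ga_carrier_def by auto

locale grp = group G for G :: "'a monoid" (structure)

context grp begin

lemma C_out: "f \<in> ga_carrier G \<Longrightarrow> x \<notin> carrier G \<Longrightarrow> f x = 0"
  unfolding ga_carrier_def by auto

lemma C_fin: "f \<in> ga_carrier G \<Longrightarrow> finite {x. f x \<noteq> 0}"
  unfolding ga_carrier_def by auto

lemma C_sub: "f \<in> ga_carrier G \<Longrightarrow> {x. f x \<noteq> 0} \<subseteq> carrier G"
  unfolding ga_carrier_def by auto

lemma delta_C: "g \<in> carrier G \<Longrightarrow> ga_delta g \<in> ga_carrier G"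
  unfolding ga_carrier_def ga_delta_def by auto

lemma add_C: "f \<in> ga_carrier G \<Longrightarrow> g \<in> ga_carrier G \<Longrightarrow> ga_add f g \<in> ga_carrier G"
  unfolding ga_carrier_iff ga_add_def
  by (auto intro: finite_subset[of _ "{x. f x \<noteq> 0} \<union> {x. g x \<noteq> 0}"]) (metis add.left_neutral)

lemma diff_C: "f \<in> ga_carrier G \<Longrightarrow> g \<in> ga_carrier G \<Longrightarrow> ga_diff f g \<in> ga_carrier G"
  unfolding ga_carrier_iff ga_diff_def
  by (auto intro: finite_subset[of _ "{x. f x \<noteq> 0} \<union> {x. g x \<noteq> 0}"]) metis

lemma smult_C: "f \<in> ga_carrier G \<Longrightarrow> ga_smult c f \<in> ga_carrier G"
  unfolding ga_carrier_iff ga_smult_def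
  by (auto intro: finite_subset[of _ "{x. f x \<noteq> 0}"])

lemma zero_C: "(\<lambda>x. 0) \<in> ga_carrier G"
  unfolding ga_carrier_iff by auto

lemma mult_sum:
  assumes "finite S" "{y. f y \<noteq> 0} \<subseteq> S"
  shows "ga_mult G f g x = (if x \<in> carrier G then (\<Sum>y\<in>S. f y * g (inv y \<otimes> x)) else 0)"
proof -
  have "(\<Sum>y\<in>{y. f y \<noteq> 0}. f y * g (inv y \<otimes> x)) = (\<Sum>y\<in>S. f y * g (inv y \<otimes> x))"
    by (rule sum.mono_neutral_left) (use assms in auto)
  then show ?thesis unfolding ga_mult_def by simp
qed

lemma supp_mult:
  assumes "f \<in> ga_carrier G"
  shows "{x. ga_mult G f g x \<noteq> 0} \<subseteq> (\<lambda>(y,w). y \<otimes> w) ` ({y. f y \<noteq> 0} \<times> {w. g w \<noteq> 0})"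
proof
  fix x assume "x \<in> {x. ga_mult G f g x \<noteq> 0}"
  then have ne: "ga_mult G f g x \<noteq> 0" by simp
  have x: "x \<in> carrier G"
  proof (rule ccontr)
    assume "x \<notin> carrier G"
    then have "ga_mult G f g x = 0" by (simp add: ga_mult_def)
    with ne show False by simp
  qed
  have s: "(\<Sum>y\<in>{y. f y \<noteq> 0}. f y * g (inv y \<otimes> x)) \<noteq> 0"
    using ne x by (simp add: ga_mult_def)
  from sum.not_neutral_contains_not_neutral[OF s] obtain y where
    y: "y \<in> {y. f y \<noteq> 0}" "f y * g (inv y \<otimes> x) \<noteq> 0" by blast
  have yc: "y \<in> carrier G" using assms y(1) C_sub by blast
  have e: "y \<otimes> (inv y \<otimes> x) = x" using x yc by (simp add: m_assoc[symmetric])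
  have "(y, inv y \<otimes> x) \<in> {y. f y \<noteq> 0} \<times> {w. g w \<noteq> 0}" using y by simp
  then show "x \<in> (\<lambda>(y,w). y \<otimes> w) ` ({y. f y \<noteq> 0} \<times> {w. g w \<noteq> 0})"
    using e by force
qed

lemma mult_C:
  assumes "f \<in> ga_carrier G" "g \<in> ga_carrier G"
  shows "ga_mult G f g \<in> ga_carrier G"
  unfolding ga_carrier_iff
proof
  have "finite ((\<lambda>(y,w). y \<otimes> w) ` ({y. f y \<noteq> 0} \<times> {w. g w \<noteq> 0}))"
    using assms C_fin by blast
  then show "finite {x. ga_mult G f g x \<noteq> 0}"
    by (rule finite_subset[OF supp_mult[OF assms(1)]])
  show "\<forall>x. ga_mult G f g x \<noteq> 0 \<longrightarrow> x \<in> carrier G"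
    unfolding ga_mult_def by auto
qed

lemma delta_mult_left:
  assumes "g \<in> carrier G"
  shows "ga_mult G (ga_delta g) f = (\<lambda>x. if x \<in> carrier G then f (inv g \<otimes> x) else 0)"
proof -
  have e: "{y. ga_delta g y \<noteq> 0} = {g}" unfolding ga_delta_def by auto
  show ?thesis unfolding ga_mult_def e by (rule ext) (simp add: ga_delta_def)
qed

lemma delta_mult:
  assumes "g \<in> carrier G" "h \<in> carrier G"
  shows "ga_mult G (ga_delta g) (ga_delta h) = ga_delta (g \<otimes> h)"
proof
  fix x
  show "ga_mult G (ga_delta g) (ga_delta h) x = ga_delta (g \<otimes> h) x"
  proof (cases "x \<in> carrier G")
    case True
    have "(inv g \<otimes> x = h) = (x = g \<otimes> h)"
      using True assms by (metis inv_solve_left m_closed)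
    then show ?thesis using True assms by (simp add: delta_mult_left) (simp add: ga_delta_def)
  next
    case False
    then have "x \<noteq> g \<otimes> h" using assms by auto
    then show ?thesis using False assms by (simp add: delta_mult_left) (simp add: ga_delta_def)
  qed
qed

lemma one_mult: "f \<in> ga_carrier G \<Longrightarrow> ga_mult G (ga_delta \<one>) f = f"
  by (rule ext) (simp add: delta_mult_left C_out)

lemma mult_one:
  assumes "f \<in> ga_carrier G"
  shows "ga_mult G f (ga_delta \<one>) = f"
proof
  fix x
  show "ga_mult G f (ga_delta \<one>) x = f x"
  proof (cases "x \<in> carrier G")
    case True
    have "(\<Sum>y\<in>{y. f y \<noteq> 0}. f y * ga_delta \<one> (inv y \<otimes> x)) = (\<Sum>y\<in>{y. f y \<noteq> 0}. if y = x then f y else 0)"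
    proof (rule sum.cong[OF refl])
      fix y assume "y \<in> {y. f y \<noteq> 0}"
      then have yc: "y \<in> carrier G" using C_sub[OF assms] by blast
      have "(inv y \<otimes> x = \<one>) = (y = x)" using yc True
        by (metis inv_closed inv_inv inv_equality r_inv)
      then show "f y * ga_delta \<one> (inv y \<otimes> x) = (if y = x then f y else 0)"
        by (simp add: ga_delta_def)
    qed
    also have "\<dots> = f x" using C_fin[OF assms] by (simp add: sum.delta)
    finally show ?thesis using True by (simp add: ga_mult_def)
  next
    case False
    then show ?thesis using assms by (simp add: ga_mult_def C_out)
  qed
qed

lemma mult_add: "ga_mult G f (ga_add g h) = ga_add (ga_mult G f g) (ga_mult G f h)"
  unfolding ga_mult_def ga_add_def by (rule ext) (simp add: distrib_left sum.distrib)

lemma mult_smult: "ga_mult G f (ga_smult c g) = ga_smult c (ga_mult G f g)"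
  unfolding ga_mult_def ga_smult_def by (rule ext) (simp add: sum_distrib_left mult_ac)

lemma mult_diff: "ga_mult G f (ga_diff g h) = ga_diff (ga_mult G f g) (ga_mult G f h)"
  unfolding ga_mult_def ga_diff_def by (rule ext) (simp add: right_diff_distrib sum_subtractf)

lemma smult_mult: "ga_mult G (ga_smult c f) h = ga_smult c (ga_mult G f h)"
proof (cases "c = 0")
  case True
  have e: "{y. c * f y \<noteq> 0} = {}" using True by simp
  show ?thesis unfolding ga_mult_def ga_smult_def e using True by (intro ext) simp
next
  case False
  then have e: "{y. c * f y \<noteq> 0} = {y. f y \<noteq> 0}" by auto
  show ?thesis unfolding ga_mult_def ga_smult_def e
    by (rule ext) (simp add: sum_distrib_left mult_ac)
qed

lemma add_mult:
  assumes "f \<in> ga_carrier G" "g \<in> ga_carrier G"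
  shows "ga_mult G (ga_add f g) h = ga_add (ga_mult G f h) (ga_mult G g h)"
proof
  fix x
  let ?S = "{y. f y \<noteq> 0} \<union> {y. g y \<noteq> 0}"
  have fin: "finite ?S" using assms C_fin by blast
  have s1: "{y. ga_add f g y \<noteq> 0} \<subseteq> ?S" by (auto simp: ga_add_def)
  have "ga_mult G (ga_add f g) h x = (if x \<in> carrier G then (\<Sum>y\<in>?S. ga_add f g y * h (inv y \<otimes> x)) else 0)"
    by (rule mult_sum[OF fin s1])
  moreover have "ga_mult G f h x = (if x \<in> carrier G then (\<Sum>y\<in>?S. f y * h (inv y \<otimes> x)) else 0)"
    by (rule mult_sum[OF fin]) blast
  moreover have "ga_mult G g h x = (if x \<in> carrier G then (\<Sum>y\<in>?S. g y * h (inv y \<otimes> x)) else 0)"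
    by (rule mult_sum[OF fin]) blast
  ultimately show "ga_mult G (ga_add f g) h x = ga_add (ga_mult G f h) (ga_mult G g h) x"
    by (simp add: ga_add_def distrib_right sum.distrib)
qed

lemma diff_eq_add: "ga_diff f g = ga_add f (ga_smult (-1) g)"
  unfolding ga_diff_def ga_add_def ga_smult_def by auto

lemma diff_mult:
  assumes "f \<in> ga_carrier G" "g \<in> ga_carrier G"
  shows "ga_mult G (ga_diff f g) h = ga_diff (ga_mult G f h) (ga_mult G g h)"
  unfolding diff_eq_add
  by (simp add: add_mult assms smult_C smult_mult)

lemma assoc:
  assumes f: "f \<in> ga_carrier G" and g: "g \<in> ga_carrier G" and h: "h \<in> ga_carrier G"
  shows "ga_mult G (ga_mult G f g) h = ga_mult G f (ga_mult G g h)"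
proof (rule ext)
  fix x
  define Sf where "Sf = {y. f y \<noteq> 0}"
  define Sg where "Sg = {y. g y \<noteq> 0}"
  define T where "T = (\<lambda>(y,w). y \<otimes> w) ` (Sf \<times> Sg)"
  have finf: "finite Sf" using f C_fin Sf_def by blast
  have fing: "finite Sg" using g C_fin Sg_def by blast
  have finT: "finite T" unfolding T_def using finf fing by blast
  have Sfc: "Sf \<subseteq> carrier G" using f C_sub Sf_def by blast
  have Sgc: "Sg \<subseteq> carrier G" using g C_sub Sg_def by blast
  have Tc: "T \<subseteq> carrier G" unfolding T_def using Sfc Sgc by auto
  have sT: "{y. ga_mult G f g y \<noteq> 0} \<subseteq> T" unfolding T_def Sf_def Sg_def by (rule supp_mult[OF f])
  show "ga_mult G (ga_mult G f g) h x = ga_mult G f (ga_mult G g h) x"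
  proof (cases "x \<in> carrier G")
    case False
    then show ?thesis by (simp add: ga_mult_def)
  next
    case True
    have "ga_mult G (ga_mult G f g) h x = (\<Sum>y'\<in>T. ga_mult G f g y' * h (inv y' \<otimes> x))"
      using mult_sum[OF finT sT] True by simp
    also have "\<dots> = (\<Sum>y'\<in>T. \<Sum>y\<in>Sf. f y * g (inv y \<otimes> y') * h (inv y' \<otimes> x))"
    proof (rule sum.cong[OF refl])
      fix y' assume "y' \<in> T"
      then have "y' \<in> carrier G" using Tc by blast
      then show "ga_mult G f g y' * h (inv y' \<otimes> x) = (\<Sum>y\<in>Sf. f y * g (inv y \<otimes> y') * h (inv y' \<otimes> x))"
        by (simp add: ga_mult_def Sf_def sum_distrib_right)
    qed
    also have "\<dots> = (\<Sum>y\<in>Sf. \<Sum>y'\<in>T. f y * g (inv y \<otimes> y') * h (inv y' \<otimes> x))"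
      by (rule sum.swap)
    also have "\<dots> = (\<Sum>y\<in>Sf. f y * ga_mult G g h (inv y \<otimes> x))"
    proof (rule sum.cong[OF refl])
      fix y assume yS: "y \<in> Sf"
      then have yc: "y \<in> carrier G" using Sfc by blast
      have sub: "(\<lambda>w. y \<otimes> w) ` Sg \<subseteq> T" unfolding T_def using yS by auto
      have "(\<Sum>y'\<in>T. g (inv y \<otimes> y') * h (inv y' \<otimes> x)) = (\<Sum>y'\<in>(\<lambda>w. y \<otimes> w) ` Sg. g (inv y \<otimes> y') * h (inv y' \<otimes> x))"
      proof (rule sum.mono_neutral_right[OF finT sub], rule ballI)
        fix y' assume y': "y' \<in> T - (\<lambda>w. y \<otimes> w) ` Sg"
        then have y'c: "y' \<in> carrier G" using Tc by blast
        have "inv y \<otimes> y' \<notin> Sg"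
        proof
          assume "inv y \<otimes> y' \<in> Sg"
          moreover have "y \<otimes> (inv y \<otimes> y') = y'" using yc y'c by (simp add: m_assoc[symmetric])
          ultimately have "y' \<in> (\<lambda>w. y \<otimes> w) ` Sg" by force
          with y' show False by blast
        qed
        then show "g (inv y \<otimes> y') * h (inv y' \<otimes> x) = 0" unfolding Sg_def by simp
      qed
      also have "\<dots> = (\<Sum>w\<in>Sg. g (inv y \<otimes> (y \<otimes> w)) * h (inv (y \<otimes> w) \<otimes> x))"
      proof (rule sum.reindex[unfolded comp_def])
        show "inj_on (\<lambda>w. y \<otimes> w) Sg"
          using inj_on_cmult[OF yc] Sgc by (rule inj_on_subset)
      qed
      also have "\<dots> = (\<Sum>w\<in>Sg. g w * h (inv w \<otimes> (inv y \<otimes> x)))"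
      proof (rule sum.cong[OF refl])
        fix w assume "w \<in> Sg"
        then have wc: "w \<in> carrier G" using Sgc by blast
        have "inv y \<otimes> (y \<otimes> w) = w" using yc wc by (simp add: m_assoc[symmetric])
        moreover have "inv (y \<otimes> w) \<otimes> x = inv w \<otimes> (inv y \<otimes> x)"
          using yc wc True by (simp add: inv_mult_group m_assoc)
        ultimately show "g (inv y \<otimes> (y \<otimes> w)) * h (inv (y \<otimes> w) \<otimes> x) = g w * h (inv w \<otimes> (inv y \<otimes> x))"
          by simp
      qed
      also have "\<dots> = ga_mult G g h (inv y \<otimes> x)"
        using yc True by (simp add: ga_mult_def Sg_def)
      finally have e: "(\<Sum>y'\<in>T. g (inv y \<otimes> y') * h (inv y' \<otimes> x)) = ga_mult G g h (inv y \<otimes> x)" .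
      show "(\<Sum>y'\<in>T. f y * g (inv y \<otimes> y') * h (inv y' \<otimes> x)) = f y * ga_mult G g h (inv y \<otimes> x)"
        by (simp add: e[symmetric] sum_distrib_left mult.assoc)
    qed
    also have "\<dots> = ga_mult G f (ga_mult G g h) x"
      using True by (simp add: ga_mult_def Sf_def)
    finally show ?thesis .
  qed
qed

lemma sym_C: "h \<in> carrier G \<Longrightarrow> ga_sym G h \<in> ga_carrier G"
  unfolding ga_sym_def by (simp add: add_C delta_C)

lemma ideal_C: "BH_ideal G \<subseteq> ga_carrier G"
proof
  fix x assume "x \<in> BH_ideal G"
  then show "x \<in> ga_carrier G" unfolding BH_ideal_def
  proof (induction rule: ga_ideal.induct)
    case (gen r)
    then show ?case by (auto intro!: diff_C mult_C delta_C sym_C)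
  qed (auto intro: zero_C add_C smult_C mult_C)
qed

definition eqv where "eqv f g \<longleftrightarrow> ga_diff f g \<in> BH_ideal G"

lemma eqv_refl: "eqv f f"
proof -
  have "ga_diff f f = (\<lambda>x. 0)" unfolding ga_diff_def by simp
  then show ?thesis unfolding eqv_def BH_ideal_def by (simp add: ga_ideal.zero)
qed

lemma eqv_eq: "f = g \<Longrightarrow> eqv f g" using eqv_refl by simp

lemma eqv_sym: "eqv f g \<Longrightarrow> eqv g f"
proof -
  assume "eqv f g"
  then have "ga_smult (-1) (ga_diff f g) \<in> BH_ideal G"
    unfolding eqv_def BH_ideal_def by (rule ga_ideal.smult)
  moreover have "ga_smult (-1) (ga_diff f g) = ga_diff g f"
    unfolding ga_smult_def ga_diff_def by (rule ext) simp
  ultimately show ?thesis unfolding eqv_def by simp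
qed

lemma eqv_trans: "eqv f g \<Longrightarrow> eqv g h \<Longrightarrow> eqv f h"
proof -
  assume "eqv f g" "eqv g h"
  then have "ga_add (ga_diff f g) (ga_diff g h) \<in> BH_ideal G"
    unfolding eqv_def BH_ideal_def by (rule ga_ideal.add)
  moreover have "ga_add (ga_diff f g) (ga_diff g h) = ga_diff f h"
    unfolding ga_add_def ga_diff_def by (rule ext) simp
  ultimately show ?thesis unfolding eqv_def by simp
qed

lemmas [trans] = eqv_trans

lemma eqv_add: "eqv f g \<Longrightarrow> eqv f' g' \<Longrightarrow> eqv (ga_add f f') (ga_add g g')"
proof -
  assume "eqv f g" "eqv f' g'"
  then have "ga_add (ga_diff f g) (ga_diff f' g') \<in> BH_ideal G"
    unfolding eqv_def BH_ideal_def by (rule ga_ideal.add)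
  moreover have "ga_add (ga_diff f g) (ga_diff f' g') = ga_diff (ga_add f f') (ga_add g g')"
    unfolding ga_add_def ga_diff_def by (rule ext) simp
  ultimately show ?thesis unfolding eqv_def by simp
qed

lemma eqv_smult: "eqv f g \<Longrightarrow> eqv (ga_smult c f) (ga_smult c g)"
proof -
  assume "eqv f g"
  then have "ga_smult c (ga_diff f g) \<in> BH_ideal G"
    unfolding eqv_def BH_ideal_def by (rule ga_ideal.smult)
  moreover have "ga_smult c (ga_diff f g) = ga_diff (ga_smult c f) (ga_smult c g)"
    unfolding ga_smult_def ga_diff_def by (rule ext) (simp add: right_diff_distrib)
  ultimately show ?thesis unfolding eqv_def by simp
qed

lemma eqv_lmult: "c \<in> ga_carrier G \<Longrightarrow> eqv f g \<Longrightarrow> eqv (ga_mult G c f) (ga_mult G c g)"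
proof -
  assume "c \<in> ga_carrier G" "eqv f g"
  then have "ga_mult G c (ga_diff f g) \<in> BH_ideal G"
    unfolding eqv_def BH_ideal_def by (rule ga_ideal.lmult)
  then show ?thesis unfolding eqv_def mult_diff .
qed

lemma eqv_rmult: "c \<in> ga_carrier G \<Longrightarrow> f \<in> ga_carrier G \<Longrightarrow> g \<in> ga_carrier G \<Longrightarrow>
    eqv f g \<Longrightarrow> eqv (ga_mult G f c) (ga_mult G g c)"
proof -
  assume a: "c \<in> ga_carrier G" "f \<in> ga_carrier G" "g \<in> ga_carrier G" "eqv f g"
  then have "ga_mult G (ga_diff f g) c \<in> BH_ideal G"
    unfolding eqv_def BH_ideal_def by (intro ga_ideal.rmult) auto
  then show ?thesis unfolding eqv_def diff_mult[OF a(2,3)] .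
qed

lemma eqv_gen: "g \<in> carrier G \<Longrightarrow> h \<in> carrier G \<Longrightarrow>
   eqv (ga_mult G (ga_sym G h) (ga_delta g)) (ga_mult G (ga_delta g) (ga_sym G h))"
  apply (rule eqv_sym)
  unfolding eqv_def BH_ideal_def
  by (rule ga_ideal.gen) blast

lemma subalg_C: assumes S: "S \<subseteq> ga_carrier G" shows "ga_subalg G S \<subseteq> ga_carrier G"
proof
  fix x assume "x \<in> ga_subalg G S"
  then show "x \<in> ga_carrier G"
    by (induction rule: ga_subalg.induct) (use S in \<open>auto intro: delta_C add_C smult_C mult_C\<close>)
qed

lemma P_C: "Hplus_pre G \<subseteq> ga_carrier G"
  unfolding Hplus_pre_def by (rule subalg_C) (auto intro: sym_C)

lemma P_central:
  assumes "x \<in> Hplus_pre G" "g \<in> carrier G"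
  shows "eqv (ga_mult G x (ga_delta g)) (ga_mult G (ga_delta g) x)"
proof -
  have "x \<in> ga_carrier G \<and> eqv (ga_mult G x (ga_delta g)) (ga_mult G (ga_delta g) x)"
    using assms(1) unfolding Hplus_pre_def
  proof (induction rule: ga_subalg.induct)
    case (gen s)
    then obtain h where h: "h \<in> carrier G" "s = ga_sym G h" by blast
    then show ?case using eqv_gen[OF assms(2) h(1)] sym_C by simp
  next
    case one
    show ?case using assms(2) by (simp add: delta_C delta_mult eqv_refl)
  next
    case (add a b)
    then show ?case using assms(2)
      by (simp add: add_C add_mult mult_add eqv_add delta_C)
  next
    case (smult a c)
    then show ?case using assms(2)
      by (simp add: smult_C smult_mult mult_smult eqv_smult)
  next
    case (mult a b)
    have ac: "a \<in> ga_carrier G" and bc: "b \<in> ga_carrier G" using mult by auto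
    have dc: "ga_delta g \<in> ga_carrier G" using assms(2) by (rule delta_C)
    have "eqv (ga_mult G (ga_mult G a b) (ga_delta g)) (ga_mult G a (ga_mult G b (ga_delta g)))"
      by (rule eqv_eq) (simp add: assoc ac bc dc)
    also have "eqv \<dots> (ga_mult G a (ga_mult G (ga_delta g) b))"
      using mult ac by (intro eqv_lmult) auto
    also have "eqv \<dots> (ga_mult G (ga_mult G a (ga_delta g)) b)"
      by (rule eqv_eq) (simp add: assoc ac bc dc)
    also have "eqv \<dots> (ga_mult G (ga_mult G (ga_delta g) a) b)"
      using mult ac bc dc by (intro eqv_rmult mult_C) auto
    also have "eqv \<dots> (ga_mult G (ga_delta g) (ga_mult G a b))"
      by (rule eqv_eq) (simp add: assoc ac bc dc)
    finally show ?case using ac bc by (simp add: mult_C)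
  qed
  then show ?thesis by simp
qed

lemma P_sym: "h \<in> carrier G \<Longrightarrow> ga_sym G h \<in> Hplus_pre G"
  unfolding Hplus_pre_def by (rule ga_subalg.gen) blast

lemma P_one: "ga_delta \<one> \<in> Hplus_pre G"
  unfolding Hplus_pre_def by (rule ga_subalg.one)

lemma P_add: "a \<in> Hplus_pre G \<Longrightarrow> b \<in> Hplus_pre G \<Longrightarrow> ga_add a b \<in> Hplus_pre G"
  unfolding Hplus_pre_def by (rule ga_subalg.add)

lemma P_smult: "a \<in> Hplus_pre G \<Longrightarrow> ga_smult c a \<in> Hplus_pre G"
  unfolding Hplus_pre_def by (rule ga_subalg.smult)

lemma P_mult: "a \<in> Hplus_pre G \<Longrightarrow> b \<in> Hplus_pre G \<Longrightarrow> ga_mult G a b \<in> Hplus_pre G"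
  unfolding Hplus_pre_def by (rule ga_subalg.mult)

lemma cheb:
  assumes v: "v \<in> carrier G"
  shows "\<exists>a b. a \<in> Hplus_pre G \<and> b \<in> Hplus_pre G \<and>
           ga_delta (v [^] Suc j) = ga_add (ga_mult G a (ga_delta v)) b"
proof (induction j)
  case 0
  have "ga_delta (v [^] Suc 0) = ga_add (ga_mult G (ga_delta \<one>) (ga_delta v)) (ga_smult 0 (ga_delta \<one>))"
    using v by (intro ext) (simp add: one_mult delta_C ga_add_def ga_smult_def)
  then show ?case using P_one P_smult by blast
next
  case (Suc j)
  then obtain a b where a: "a \<in> Hplus_pre G" and b: "b \<in> Hplus_pre G"
    and e: "ga_delta (v [^] Suc j) = ga_add (ga_mult G a (ga_delta v)) b" by blast
  have ac: "a \<in> ga_carrier G" and bc: "b \<in> ga_carrier G" using a b P_C by auto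
  have dv: "ga_delta v \<in> ga_carrier G" using v by (rule delta_C)
  have vi: "inv v \<in> carrier G" using v by simp
  define s where "s = ga_sym G v"
  have sc: "s \<in> ga_carrier G" unfolding s_def using v by (rule sym_C)
  have sP: "s \<in> Hplus_pre G" unfolding s_def using v by (rule P_sym)
  have sv: "ga_mult G s (ga_delta v) = ga_add (ga_delta (v \<otimes> v)) (ga_delta \<one>)"
    unfolding s_def ga_sym_def using v vi
    by (simp add: add_mult delta_C delta_mult)
  have vv: "ga_delta (v \<otimes> v) = ga_diff (ga_mult G s (ga_delta v)) (ga_delta \<one>)"
    unfolding sv ga_add_def ga_diff_def by (rule ext) simp
  have "ga_delta (v [^] Suc (Suc j)) = ga_mult G (ga_delta (v [^] Suc j)) (ga_delta v)"
    using v by (simp add: delta_mult del: nat_pow_Suc)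
  also have "\<dots> = ga_add (ga_mult G (ga_mult G a (ga_delta v)) (ga_delta v)) (ga_mult G b (ga_delta v))"
    unfolding e by (rule add_mult) (use ac bc dv in \<open>auto intro: mult_C\<close>)
  also have "ga_mult G (ga_mult G a (ga_delta v)) (ga_delta v) = ga_mult G a (ga_delta (v \<otimes> v))"
    using ac dv v by (simp add: assoc delta_mult)
  also have "\<dots> = ga_diff (ga_mult G (ga_mult G a s) (ga_delta v)) a"
    unfolding vv mult_diff using ac sc dv by (simp add: assoc mult_one)
  also have "ga_add (ga_diff (ga_mult G (ga_mult G a s) (ga_delta v)) a) (ga_mult G b (ga_delta v))
      = ga_add (ga_mult G (ga_add (ga_mult G a s) b) (ga_delta v)) (ga_smult (-1) a)"
  proof -
    have am: "ga_mult G (ga_add (ga_mult G a s) b) (ga_delta v) = ga_add (ga_mult G (ga_mult G a s) (ga_delta v)) (ga_mult G b (ga_delta v))"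
      by (rule add_mult) (use ac sc bc in \<open>auto intro: mult_C\<close>)
    show ?thesis unfolding am by (intro ext) (simp add: ga_add_def ga_diff_def ga_smult_def)
  qed
  finally have fin: "ga_delta (v [^] Suc (Suc j)) = ga_add (ga_mult G (ga_add (ga_mult G a s) b) (ga_delta v)) (ga_smult (-1) a)" .
  show ?case
  proof (intro exI conjI)
    show "ga_add (ga_mult G a s) b \<in> Hplus_pre G" by (intro P_add P_mult a sP b)
    show "ga_smult (-1) a \<in> Hplus_pre G" by (rule P_smult[OF a])
    show "ga_delta (v [^] Suc (Suc j)) = ga_add (ga_mult G (ga_add (ga_mult G a s) b) (ga_delta v)) (ga_smult (-1) a)" by (rule fin)
  qed
qed

definition rel where "rel a g g' \<longleftrightarrow> eqv (ga_mult G a (ga_delta g)) (ga_mult G a (ga_delta g'))"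

lemma rel_refl: "rel a g g" unfolding rel_def by (rule eqv_refl)
lemma rel_sym: "rel a g g' \<Longrightarrow> rel a g' g" unfolding rel_def by (rule eqv_sym)
lemma rel_trans: "rel a g g' \<Longrightarrow> rel a g' g'' \<Longrightarrow> rel a g g''" unfolding rel_def by (rule eqv_trans)
lemma rel_eq: "g = g' \<Longrightarrow> rel a g g'" by (simp add: rel_refl)
lemmas [trans] = rel_trans

lemma a_delta_assoc:
  assumes "a \<in> ga_carrier G" "g \<in> carrier G" "c \<in> carrier G"
  shows "ga_mult G a (ga_delta (g \<otimes> c)) = ga_mult G (ga_mult G a (ga_delta g)) (ga_delta c)"
  using assms by (simp add: assoc delta_C delta_mult)

lemma rel_right:
  assumes a: "a \<in> Hplus_pre G" and c: "g \<in> carrier G" "g' \<in> carrier G" "c \<in> carrier G"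
    and r: "rel a g g'"
  shows "rel a (g \<otimes> c) (g' \<otimes> c)"
proof -
  have ac: "a \<in> ga_carrier G" using a P_C by blast
  have "eqv (ga_mult G (ga_mult G a (ga_delta g)) (ga_delta c)) (ga_mult G (ga_mult G a (ga_delta g')) (ga_delta c))"
    using r unfolding rel_def by (intro eqv_rmult) (use ac c in \<open>auto intro: mult_C delta_C\<close>)
  then show ?thesis unfolding rel_def using a_delta_assoc ac c by simp
qed

lemma rel_left:
  assumes a: "a \<in> Hplus_pre G" and c: "g \<in> carrier G" "g' \<in> carrier G" "c \<in> carrier G"
    and r: "rel a g g'"
  shows "rel a (c \<otimes> g) (c \<otimes> g')"
proof -
  have ac: "a \<in> ga_carrier G" using a P_C by blast
  have dc: "ga_delta c \<in> ga_carrier G" "ga_delta g \<in> ga_carrier G" "ga_delta g' \<in> ga_carrier G"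
    using c by (auto intro: delta_C)
  have "eqv (ga_mult G a (ga_delta (c \<otimes> g))) (ga_mult G (ga_mult G a (ga_delta c)) (ga_delta g))"
    by (rule eqv_eq) (rule a_delta_assoc[OF ac c(3,1)])
  also have "eqv \<dots> (ga_mult G (ga_mult G (ga_delta c) a) (ga_delta g))"
    by (rule eqv_rmult) (use P_central[OF a c(3)] ac dc in \<open>auto intro: mult_C\<close>)
  also have "eqv \<dots> (ga_mult G (ga_delta c) (ga_mult G a (ga_delta g)))"
    by (rule eqv_eq) (simp add: assoc ac dc)
  also have "eqv \<dots> (ga_mult G (ga_delta c) (ga_mult G a (ga_delta g')))"
    by (rule eqv_lmult) (use r dc in \<open>auto simp: rel_def\<close>)
  also have "eqv \<dots> (ga_mult G (ga_mult G (ga_delta c) a) (ga_delta g'))"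
    by (rule eqv_eq) (simp add: assoc ac dc)
  also have "eqv \<dots> (ga_mult G (ga_mult G a (ga_delta c)) (ga_delta g'))"
    by (rule eqv_rmult) (use eqv_sym[OF P_central[OF a c(3)]] ac dc in \<open>auto intro: mult_C\<close>)
  also have "eqv \<dots> (ga_mult G a (ga_delta (c \<otimes> g')))"
    by (rule eqv_eq) (rule a_delta_assoc[OF ac c(3,2), symmetric])
  finally show ?thesis unfolding rel_def .
qed

definition comm where "comm a y \<longleftrightarrow> (\<forall>g\<in>carrier G. rel a (g \<otimes> y) (y \<otimes> g))"

lemma comm_inv:
  assumes a: "a \<in> Hplus_pre G" and y: "y \<in> carrier G" and cm: "comm a y"
  shows "comm a (inv y)"
  unfolding comm_def
proof
  fix g assume g: "g \<in> carrier G"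
  define x where "x = inv y \<otimes> g \<otimes> inv y"
  have x: "x \<in> carrier G" unfolding x_def using g y by simp
  have "rel a (x \<otimes> y) (y \<otimes> x)" using cm x unfolding comm_def by blast
  moreover have "x \<otimes> y = inv y \<otimes> g" unfolding x_def using g y by (simp add: m_assoc)
  moreover have "y \<otimes> x = g \<otimes> inv y" unfolding x_def using g y by (simp add: m_assoc[symmetric])
  ultimately show "rel a (g \<otimes> inv y) (inv y \<otimes> g)" by (simp add: rel_sym)
qed

lemma comm_pow:
  assumes a: "a \<in> Hplus_pre G" and y: "y \<in> carrier G" and cm: "comm a y"
  shows "comm a (y [^] (n::nat))"
  unfolding comm_def
proof
  fix g assume g: "g \<in> carrier G"
  show "rel a (g \<otimes> y [^] n) (y [^] n \<otimes> g)"
  proof (induction n)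
    case 0
    then show ?case using g by (simp add: rel_refl)
  next
    case (Suc n)
    have yn: "y [^] n \<in> carrier G" using y by simp
    have "rel a (g \<otimes> y [^] Suc n) ((g \<otimes> y [^] n) \<otimes> y)"
      by (rule rel_eq) (use g y in \<open>simp add: m_assoc\<close>)
    also have "rel a \<dots> ((y [^] n \<otimes> g) \<otimes> y)"
      by (rule rel_right[OF a _ _ y Suc]) (use g yn in auto)
    also have "rel a \<dots> (y [^] n \<otimes> (g \<otimes> y))"
      by (rule rel_eq) (use g y in \<open>simp add: m_assoc\<close>)
    also have "rel a \<dots> (y [^] n \<otimes> (y \<otimes> g))"
    proof -
      have "rel a (g \<otimes> y) (y \<otimes> g)" using cm g unfolding comm_def by blast
      then show ?thesis by (rule rel_left[OF a _ _ yn, rotated 2]) (use g y in auto)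
    qed
    also have "rel a \<dots> (y [^] Suc n \<otimes> g)"
      by (rule rel_eq) (use g y in \<open>simp add: m_assoc\<close>)
    finally show ?case .
  qed
qed

lemma comm_int_pow:
  assumes a: "a \<in> Hplus_pre G" and y: "y \<in> carrier G" and cm: "comm a y"
  shows "comm a (y [^] (i::int))"
proof (cases "i < 0")
  case True
  have e: "y [^] i = inv (y [^] nat (- i))" using True by (simp only: int_pow_def2 if_True)
  have "y [^] nat (- i) \<in> carrier G" using y by (rule nat_pow_closed)
  from comm_inv[OF a this comm_pow[OF a y cm]] show ?thesis unfolding e .
next
  case False
  have e: "y [^] i = y [^] nat i" using False by (simp only: int_pow_def2 if_False)
  from comm_pow[OF a y cm] show ?thesis unfolding e .
qed

lemma rel_powprod:
  assumes a: "a \<in> Hplus_pre G" and x: "x \<in> carrier G" and y: "y \<in> carrier G" and cm: "comm a y"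
  shows "rel a ((x \<otimes> y) [^] (n::nat)) (x [^] n \<otimes> y [^] n)"
proof (induction n)
  case 0
  then show ?case by (simp add: rel_refl)
next
  case (Suc n)
  have xn: "x [^] n \<in> carrier G" and yn: "y [^] n \<in> carrier G" using x y by auto
  have "rel a ((x \<otimes> y) [^] Suc n) ((x \<otimes> y) [^] n \<otimes> (x \<otimes> y))" by (simp add: rel_refl)
  also have "rel a \<dots> ((x [^] n \<otimes> y [^] n) \<otimes> (x \<otimes> y))"
    by (rule rel_right[OF a _ _ _ Suc]) (use x y in auto)
  also have "rel a \<dots> ((x [^] n \<otimes> (y [^] n \<otimes> x)) \<otimes> y)"
    by (rule rel_eq) (use xn yn x y in \<open>simp add: m_assoc\<close>)
  also have "rel a \<dots> ((x [^] n \<otimes> (x \<otimes> y [^] n)) \<otimes> y)"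
  proof -
    have "rel a (x \<otimes> y [^] n) (y [^] n \<otimes> x)"
      using comm_pow[OF a y cm, of n] x unfolding comm_def by blast
    then have "rel a (y [^] n \<otimes> x) (x \<otimes> y [^] n)" by (rule rel_sym)
    then have "rel a (x [^] n \<otimes> (y [^] n \<otimes> x)) (x [^] n \<otimes> (x \<otimes> y [^] n))"
      by (rule rel_left[OF a _ _ xn, rotated 2]) (use xn yn x y in auto)
    then show ?thesis
      by (rule rel_right[OF a _ _ y, rotated 2]) (use xn yn x y in auto)
  qed
  also have "rel a \<dots> (x [^] Suc n \<otimes> y [^] Suc n)"
    by (rule rel_eq) (use xn yn x y in \<open>simp add: m_assoc nat_pow_Suc\<close>)
  finally show ?case .
qed

lemma eqv_cancel:
  assumes "ga_add X Y = ga_add X' Y'" "eqv Y Y'"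
  shows "eqv X X'"
proof -
  have "ga_diff X X' = ga_diff Y' Y"
  proof
    fix t
    have "X t + Y t = X' t + Y' t" using fun_cong[OF assms(1), of t] by (simp add: ga_add_def)
    then show "ga_diff X X' t = ga_diff Y' Y t" unfolding ga_diff_def
      by (simp add: algebra_simps)
  qed
  then show ?thesis using eqv_sym[OF assms(2)] unfolding eqv_def by simp
qed

lemma subalg_pow:
  assumes x: "x \<in> carrier G" and d: "ga_delta x \<in> ga_subalg G T"
  shows "ga_delta (x [^] (j::nat)) \<in> ga_subalg G T"
proof (induction j)
  case 0
  then show ?case by (simp add: ga_subalg.one)
next
  case (Suc j)
  have "ga_delta (x [^] Suc j) = ga_mult G (ga_delta (x [^] j)) (ga_delta x)"
    using x by (simp add: delta_mult)
  then show ?case using Suc d by (simp add: ga_subalg.mult)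
qed

lemma core:
  fixes p :: nat and k n :: int
  assumes u: "u \<in> carrier G" and v: "v \<in> carrier G"
    and rel_uv: "u [^] p = v [^] Suc (2 * p)"
    and central: "\<forall>g\<in>carrier G. g \<otimes> v [^] Suc (2 * p) = v [^] Suc (2 * p) \<otimes> g"
    and kn: "- int p * k + (2 * int p + 1) * n = 1"
    and m: "m = u [^] n \<otimes> v [^] (- k)"
  shows "H_in_subalg G (ga_delta (v [^] Suc (2 * p) \<otimes> m [^] (- (int p * (2 * int p + 1)))))
           (Hplus_pre G \<union> {ga_delta m, ga_delta (inv m)})"
proof -
  define z where "z = v [^] Suc (2 * p)"
  have zc: "z \<in> carrier G" unfolding z_def using v by simp
  have mc: "m \<in> carrier G" unfolding m using u v by simp
  obtain a b where a: "a \<in> Hplus_pre G" and b: "b \<in> Hplus_pre G"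
    and ez: "ga_delta z = ga_add (ga_mult G a (ga_delta v)) b"
    using cheb[OF v, of "2 * p"] unfolding z_def by blast
  have ac: "a \<in> ga_carrier G" and bc: "b \<in> ga_carrier G" using a b P_C by auto
  define w where "w = ga_mult G a (ga_delta v)"
  have dv: "ga_delta v \<in> ga_carrier G" using v by (rule delta_C)
  have wc: "w \<in> ga_carrier G" unfolding w_def using ac dv by (rule mult_C)
  have cv: "comm a v" unfolding comm_def
  proof
    fix g assume g: "g \<in> carrier G"
    have dg: "ga_delta g \<in> ga_carrier G" using g by (rule delta_C)
    have "eqv (ga_mult G a (ga_delta (g \<otimes> v))) (ga_mult G (ga_mult G a (ga_delta g)) (ga_delta v))"
      by (rule eqv_eq) (rule a_delta_assoc[OF ac g v])
    also have "eqv \<dots> (ga_mult G (ga_mult G (ga_delta g) a) (ga_delta v))"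
      by (rule eqv_rmult) (use P_central[OF a g] ac dg dv in \<open>auto intro: mult_C\<close>)
    also have "eqv \<dots> (ga_mult G (ga_delta g) w)"
      by (rule eqv_eq) (simp add: assoc ac dg dv w_def)
    also have "eqv \<dots> (ga_mult G w (ga_delta g))"
    proof (rule eqv_cancel)
      have "ga_add (ga_mult G (ga_delta g) w) (ga_mult G (ga_delta g) b) = ga_mult G (ga_delta g) (ga_delta z)"
        unfolding ez w_def mult_add ..
      also have "\<dots> = ga_mult G (ga_delta z) (ga_delta g)"
        using g zc central unfolding z_def by (simp add: delta_mult)
      also have "\<dots> = ga_add (ga_mult G w (ga_delta g)) (ga_mult G b (ga_delta g))"
        unfolding ez w_def[symmetric] by (rule add_mult[OF wc bc])
      finally show "ga_add (ga_mult G (ga_delta g) w) (ga_mult G (ga_delta g) b) = ga_add (ga_mult G w (ga_delta g)) (ga_mult G b (ga_delta g))" .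
      show "eqv (ga_mult G (ga_delta g) b) (ga_mult G b (ga_delta g))"
        by (rule eqv_sym) (rule P_central[OF b g])
    qed
    also have "eqv \<dots> (ga_mult G a (ga_delta (v \<otimes> g)))"
      by (rule eqv_eq) (simp add: w_def a_delta_assoc[OF ac v g])
    finally show "rel a (g \<otimes> v) (v \<otimes> g)" unfolding rel_def .
  qed
  have cvk: "comm a (v [^] (- k))" by (rule comm_int_pow[OF a v cv])
  have "rel a (m [^] p) ((u [^] n) [^] p \<otimes> (v [^] (- k)) [^] p)"
    unfolding m by (rule rel_powprod[OF a _ _ cvk]) (use u v in auto)
  also have "(u [^] n) [^] p \<otimes> (v [^] (- k)) [^] p = v"
  proof -
    have "(u [^] n) [^] p = (u [^] n) [^] (int p)" by (simp add: int_pow_int)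
    also have "\<dots> = u [^] (int p * n)" using u by (simp add: int_pow_pow mult.commute)
    also have "\<dots> = (u [^] (int p)) [^] n" using u by (simp add: int_pow_pow)
    also have "\<dots> = (v [^] int (Suc (2 * p))) [^] n" by (simp only: int_pow_int rel_uv)
    also have "\<dots> = v [^] (int (Suc (2 * p)) * n)" using v by (simp add: int_pow_pow)
    finally have e1: "(u [^] n) [^] p = v [^] (int (Suc (2 * p)) * n)" .
    have "(v [^] (- k)) [^] p = (v [^] (- k)) [^] (int p)" by (simp add: int_pow_int)
    also have "\<dots> = v [^] (- k * int p)" using v by (simp add: int_pow_pow)
    finally have e2: "(v [^] (- k)) [^] p = v [^] (- k * int p)" .
    have "(u [^] n) [^] p \<otimes> (v [^] (- k)) [^] p = v [^] (int (Suc (2 * p)) * n + - k * int p)"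
      unfolding e1 e2 using v by (simp only: int_pow_mult)
    also have "int (Suc (2 * p)) * n + - k * int p = 1" using kn by (simp add: algebra_simps)
    finally show ?thesis using v by simp
  qed
  finally have rmp: "rel a (m [^] p) v" .
  define T where "T = Hplus_pre G \<union> {ga_delta m, ga_delta (inv m)}"
  define N where "N = p * (2 * p + 1)"
  have eN: "m [^] (- (int p * (2 * int p + 1))) = (inv m) [^] N"
  proof -
    have "int p * (2 * int p + 1) = int N" unfolding N_def by (simp add: algebra_simps)
    then show ?thesis using mc by (simp add: int_pow_neg_int nat_pow_inv)
  qed
  define E where "E = ga_add (ga_mult G a (ga_delta (m [^] p))) b"
  have mpc: "ga_delta (m [^] p) \<in> ga_carrier G" using mc by (simp add: delta_C)
  have Ec: "E \<in> ga_carrier G" unfolding E_def using ac bc mpc by (intro add_C mult_C)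
  have zE: "eqv (ga_delta z) E"
    unfolding ez E_def w_def[symmetric]
    by (rule eqv_add[OF _ eqv_refl]) (use rmp in \<open>simp add: rel_def w_def eqv_sym\<close>)
  have imN: "inv m [^] N \<in> carrier G" using mc by simp
  have dN: "ga_delta (inv m [^] N) \<in> ga_carrier G" using imN by (rule delta_C)
  have "ga_delta (z \<otimes> inv m [^] N) = ga_mult G (ga_delta z) (ga_delta (inv m [^] N))"
    using zc imN by (simp add: delta_mult)
  then have fin: "eqv (ga_delta (z \<otimes> inv m [^] N)) (ga_mult G E (ga_delta (inv m [^] N)))"
    using eqv_rmult[OF dN delta_C[OF zc] Ec zE] by simp
  have mT: "ga_delta m \<in> ga_subalg G T" "ga_delta (inv m) \<in> ga_subalg G T"
    unfolding T_def by (auto intro: ga_subalg.gen)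
  have aT: "a \<in> ga_subalg G T" "b \<in> ga_subalg G T"
    unfolding T_def using a b by (auto intro: ga_subalg.gen)
  have ET: "ga_mult G E (ga_delta (inv m [^] N)) \<in> ga_subalg G T"
    unfolding E_def
    by (intro ga_subalg.mult ga_subalg.add aT subalg_pow mT mc) (use mc in simp)
  show ?thesis unfolding H_in_subalg_def T_def[symmetric] eN z_def[symmetric]
    using ET fin unfolding eqv_def by blast
qed

lemma main_grp:
  fixes p :: nat and k n :: int
  assumes u: "u \<in> carrier G" and v: "v \<in> carrier G"
    and r: "u [^] p = v [^] (2 * p + 1)"
    and gen: "generate G {u, v} = carrier G"
    and kn: "- int p * k + (2 * int p + 1) * n = 1"
  shows "H_in_subalg G (ga_delta (v [^] (2 * p + 1) \<otimes> (u [^] n \<otimes> v [^] (- k)) [^] (- (int p * (2 * int p + 1)))))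
           (Hplus_pre G \<union> {ga_delta (u [^] n \<otimes> v [^] (- k)), ga_delta (inv (u [^] n \<otimes> v [^] (- k)))})"
proof -
  define m where "m = u [^] n \<otimes> v [^] (- k)"
  have r': "u [^] p = v [^] Suc (2 * p)" using r by simp
  define z where "z = v [^] Suc (2 * p)"
  have zc: "z \<in> carrier G" unfolding z_def using v by simp
  have zu: "u \<otimes> z = z \<otimes> u" unfolding z_def r'[symmetric] using u
    by (simp add: nat_pow_Suc2[symmetric] del: nat_pow_Suc)
  have zv: "v \<otimes> z = z \<otimes> v" unfolding z_def using v
    by (metis nat_pow_Suc nat_pow_Suc2)
  have inv_comm: "inv h \<otimes> z = z \<otimes> inv h" if h: "h \<in> carrier G" and hz: "h \<otimes> z = z \<otimes> h" for h
  proof -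
    have "inv h \<otimes> z = inv h \<otimes> (z \<otimes> h) \<otimes> inv h" using h zc by (simp add: m_assoc)
    also have "\<dots> = inv h \<otimes> (h \<otimes> z) \<otimes> inv h" using hz by simp
    also have "\<dots> = z \<otimes> inv h" using h zc by (simp add: m_assoc[symmetric])
    finally show ?thesis .
  qed
  have "g \<otimes> z = z \<otimes> g" if "g \<in> generate G {u, v}" for g
    using that
  proof (induction rule: generate.induct)
    case one
    then show ?case using zc by simp
  next
    case (incl h)
    then show ?case using zu zv by auto
  next
    case (inv h)
    then show ?case using zu zv inv_comm u v by auto
  next
    case (eng h1 h2)
    have "h1 \<in> carrier G" "h2 \<in> carrier G" using eng.hyps gen by auto
    note hc = \<open>h1 \<in> carrier G\<close> \<open>h2 \<in> carrier G\<close>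
    have "h1 \<otimes> h2 \<otimes> z = h1 \<otimes> (h2 \<otimes> z)" by (rule m_assoc[OF hc zc])
    also have "\<dots> = h1 \<otimes> (z \<otimes> h2)" using eng.IH(2) by simp
    also have "\<dots> = (h1 \<otimes> z) \<otimes> h2" by (rule m_assoc[OF hc(1) zc hc(2), symmetric])
    also have "\<dots> = (z \<otimes> h1) \<otimes> h2" using eng.IH(1) by simp
    also have "\<dots> = z \<otimes> (h1 \<otimes> h2)" by (rule m_assoc[OF zc hc])
    finally show ?case .
  qed
  then have central: "\<forall>g\<in>carrier G. g \<otimes> v [^] Suc (2 * p) = v [^] Suc (2 * p) \<otimes> g"
    using gen unfolding z_def by blast
  have "H_in_subalg G (ga_delta (v [^] Suc (2 * p) \<otimes> m [^] (- (int p * (2 * int p + 1)))))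
           (Hplus_pre G \<union> {ga_delta m, ga_delta (inv m)})"
    by (rule core[OF u v r' central kn]) (simp add: m_def)
  then show ?thesis unfolding m_def by simp
qed
end

theorem mainTheorem3:
  fixes G :: "'a monoid" and u v :: 'a and p :: nat and k n :: int
  assumes "p \<ge> 3" and "odd p"
    and pres: "torus_presentation G u v p (2 * p + 1)"
    and kn: "- int p * k + (2 * int p + 1) * n = 1"
  defines "m \<equiv> u [^]\<^bsub>G\<^esub> n \<otimes>\<^bsub>G\<^esub> v [^]\<^bsub>G\<^esub> (- k)"
    and "l \<equiv> v [^]\<^bsub>G\<^esub> (2 * p + 1) \<otimes>\<^bsub>G\<^esub> (u [^]\<^bsub>G\<^esub> n \<otimes>\<^bsub>G\<^esub> v [^]\<^bsub>G\<^esub> (- k)) [^]\<^bsub>G\<^esub> (- (int p * (2 * int p + 1)))"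
  shows "H_in_subalg G (ga_delta l)
           (Hplus_pre G \<union> {ga_delta m, ga_delta (inv\<^bsub>G\<^esub> m)})"
proof -
  have gG: "group G" and u: "u \<in> carrier G" and v: "v \<in> carrier G"
    and r: "u [^]\<^bsub>G\<^esub> p = v [^]\<^bsub>G\<^esub> (2 * p + 1)"
    and gen: "generate G {u, v} = carrier G"
    using pres unfolding torus_presentation_def by auto
  have "grp G" by (simp add: grp_def gG)
  from grp.main_grp[OF this u v r gen kn] show ?thesis unfolding l_def m_def .
qed

end
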